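(* Let $\phi$ be an instance of \textsc{Max (2,3)-SAT} with $n$ variables and let $T_\phi$ be the tournament instance constructed from $\phi$ as described in the context. If $T_\phi$ has a seeding whose tournament value is at least $k+n$, then $\phi$ admits an assignment that satisfies at least $k$ clauses.
   Context: Tournament model: players form a finite set of size $2^{n'}$ totally ordered by strength (stronger beats weaker). A seeding is a bijection $\sigma$ from players to $[2^{n'}]$. In round $r=1,\dots,n'$, for each block of seed positions $\{(k-1)2^r+1,\dots,k2^r\}$, the winner $a$ of its first half $\{(k-1)2^r+1,\dots,(k-1)2^r+2^{r-1}\}$ plays the winner $b$ of its second half (a single-position block is won by the player seeded there), the stronger one wins the block, and the game has value $v(a,b)$ (values do not depend on the round). The tournament value is the sum of values of all games played. \textsc{Max (2,3)-SAT} instance: a CNF formula $\phi$ with variables $x_1,\dots,x_n$ and clauses $c_1,\dots,c_m$, each clause having exactly two literals and each variable appearing in at most three clauses. Construction of $T_\phi$: let $n'$ be the smallest integer with $16n\le 2^{n'}$ and $p=2^{n'}-16n$. Players: for each $i\in[n]$, variable players $x_i,x_i^T,x_i^F$ and special players $\widehat d_i,d_i,\widetilde d_i$; for each clause $c$, a clause player $c$; dummy players $f_1,\dots,f_{10n+p-m}$. Strength order (strongest first): $\widehat d_1>d_1>\widetilde d_1>\widehat d_2>d_2>\widetilde d_2>\dots>\widehat d_n>d_n>\widetilde d_n>x_1>x_1^T>x_1^F>\dots>x_n>x_n^T>x_n^F>c_1>\dots>c_m>f_1>\dots>f_{10n+p-m}$. Round-oblivious symmetric game values ($v(a,b)=v(b,a)$):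 for each $i$, $v(x_i,x_i^T)=v(x_i,x_i^F)=1$; for each clause $c$ containing a literal of variable $x$, $v(c,x^T)=1$ if $x$ appears non-negated in $c$ and $v(c,x^F)=1$ if it appears negated; for each $i$, $v(d_i,\widehat d_i)=v(d_i,\widetilde d_i)=v(d_i,x_i)=0$; for each $i$ and every player $Y$ for which the pair value has not been set above, $v(d_i,Y)=v(x_i,Y)=-5$; all remaining pairs have value $0$. Thus the values lie in $\{0,1,-5\}$. *)

theory Defs
  imports Main "HOL-Library.Product_Lexorder"
begin

text \<open>A literal is a pair (i, b): variable x_i, non-negated iff b = True.
  A formula with n variables x_1..x_n is a list of clauses c_1..c_m, each clause
  a pair of two (distinct) literals.\<close>

type_synonym literal = "nat \<times> bool"
type_synonym clause = "literal \<times> literal"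

definition clause_lits :: "clause \<Rightarrow> literal set" where
  "clause_lits c = {fst c, snd c}"

definition occurs_in :: "nat \<Rightarrow> clause \<Rightarrow> bool" where
  "occurs_in i c \<longleftrightarrow> (\<exists>b. (i, b) \<in> clause_lits c)"

definition max23sat :: "nat \<Rightarrow> clause list \<Rightarrow> bool" where
  "max23sat n cls \<longleftrightarrow>
     (\<forall>c\<in>set cls. fst c \<noteq> snd c \<and> (\<forall>(i, b)\<in>clause_lits c. 1 \<le> i \<and> i \<le> n)) \<and>
     (\<forall>i\<in>{1..n}. card {j\<in>{1..length cls}. occurs_in i (cls ! (j - 1))} \<le> 3)"

definition lit_sat :: "(nat \<Rightarrow> bool) \<Rightarrow> literal \<Rightarrow> bool" where
  "lit_sat a l \<longleftrightarrow> a (fst l) = snd l"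

definition num_sat :: "clause list \<Rightarrow> (nat \<Rightarrow> bool) \<Rightarrow> nat" where
  "num_sat cls a = card {j\<in>{1..length cls}. \<exists>l\<in>clause_lits (cls ! (j - 1)). lit_sat a l}"

datatype player =
    Dhat nat | D nat | Dtil nat
  | X nat | XT nat | XF nat
  | C nat | F nat

definition nprime :: "nat \<Rightarrow> nat" where
  "nprime n = (LEAST N. 16 * n \<le> 2 ^ N)"

definition pad :: "nat \<Rightarrow> nat" where
  "pad n = 2 ^ nprime n - 16 * n"

definition players :: "nat \<Rightarrow> clause list \<Rightarrow> player set" where
  "players n cls =
     Dhat ` {1..n} \<union> D ` {1..n} \<union> Dtil ` {1..n} \<union>
     X ` {1..n} \<union> XT ` {1..n} \<union> XF ` {1..n} \<union>
     C ` {1..length cls} \<union> F ` {1..10 * n + pad n - length cls}"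

text \<open>Strength key: lexicographically smaller key = stronger player. This realises
  Dhat_1 > D_1 > Dtil_1 > ... > Dtil_n > x_1 > x_1^T > x_1^F > ... > x_n^F > c_1 > ... > c_m > f_1 > ...\<close>
fun skey :: "player \<Rightarrow> nat \<times> nat \<times> nat" where
  "skey (Dhat i) = (0, i, 0)"
| "skey (D i) = (0, i, 1)"
| "skey (Dtil i) = (0, i, 2)"
| "skey (X i) = (1, i, 0)"
| "skey (XT i) = (1, i, 1)"
| "skey (XF i) = (1, i, 2)"
| "skey (C j) = (2, j, 0)"
| "skey (F j) = (3, j, 0)"

definition stronger :: "player \<Rightarrow> player \<Rightarrow> player" where
  "stronger a b = (if skey a \<le> skey b then a else b)"

definition val_one :: "nat \<Rightarrow> clause list \<Rightarrow> player \<Rightarrow> player \<Rightarrow> bool" where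
  "val_one n cls a b \<longleftrightarrow>
     (\<exists>i\<in>{1..n}. (a = X i \<and> (b = XT i \<or> b = XF i))) \<or>
     (\<exists>j\<in>{1..length cls}. \<exists>i. a = C j \<and>
        ((b = XT i \<and> (i, True) \<in> clause_lits (cls ! (j - 1))) \<or>
         (b = XF i \<and> (i, False) \<in> clause_lits (cls ! (j - 1)))))"

definition val_zero :: "nat \<Rightarrow> player \<Rightarrow> player \<Rightarrow> bool" where
  "val_zero n a b \<longleftrightarrow>
     (\<exists>i\<in>{1..n}. a = D i \<and> (b = Dhat i \<or> b = Dtil i \<or> b = X i))"

definition is_dx :: "nat \<Rightarrow> player \<Rightarrow> bool" where
  "is_dx n a \<longleftrightarrow> (\<exists>i\<in>{1..n}. a = D i \<or> a = X i)"

definition gval :: "nat \<Rightarrow> clause list \<Rightarrow> player \<Rightarrow> player \<Rightarrow> int" where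
  "gval n cls a b =
     (if val_one n cls a b \<or> val_one n cls b a then 1
      else if val_zero n a b \<or> val_zero n b a then 0
      else if is_dx n a \<or> is_dx n b then -5
      else 0)"

text \<open>winner sigma r k: winner of the k-th block (k \<ge> 1) of 2^r seed positions
  {(k-1)2^r+1..k2^r}. Round 0 blocks are single positions.\<close>
fun winner :: "player set \<Rightarrow> (player \<Rightarrow> nat) \<Rightarrow> nat \<Rightarrow> nat \<Rightarrow> player" where
  "winner P \<sigma> 0 k = inv_into P \<sigma> k"
| "winner P \<sigma> (Suc r) k = stronger (winner P \<sigma> r (2 * k - 1)) (winner P \<sigma> r (2 * k))"

definition tournament_value ::
  "player set \<Rightarrow> (player \<Rightarrow> player \<Rightarrow> int) \<Rightarrow> nat \<Rightarrow> (player \<Rightarrow> nat) \<Rightarrow> int" where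
  "tournament_value P v N \<sigma> =
     (\<Sum>r\<in>{1..N}. \<Sum>k\<in>{1..2 ^ (N - r)}.
        v (winner P \<sigma> (r - 1) (2 * k - 1)) (winner P \<sigma> (r - 1) (2 * k)))"

definition seeding :: "player set \<Rightarrow> nat \<Rightarrow> (player \<Rightarrow> nat) \<Rightarrow> bool" where
  "seeding P N \<sigma> \<longleftrightarrow> bij_betw \<sigma> P {1..2 ^ N}"

definition Tphi_value :: "nat \<Rightarrow> clause list \<Rightarrow> (player \<Rightarrow> nat) \<Rightarrow> int" where
  "Tphi_value n cls \<sigma> = tournament_value (players n cls) (gval n cls) (nprime n) \<sigma>"

end

theory Submission
  imports Defs
begin

lemma skey_inj: "skey a = skey b \<Longrightarrow> a = b"
  by (cases a; cases b; simp)

instantiation player :: linorder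
begin
definition less_eq_player :: "player \<Rightarrow> player \<Rightarrow> bool" where
  "less_eq_player a b \<longleftrightarrow> skey a \<le> skey b"
definition less_player :: "player \<Rightarrow> player \<Rightarrow> bool" where
  "less_player a b \<longleftrightarrow> skey a < skey b"
instance
proof
  fix x y z :: player
  show "(x < y) = (x \<le> y \<and> \<not> y \<le> x)" by (auto simp: less_eq_player_def less_player_def)
  show "x \<le> x" by (simp add: less_eq_player_def)
  show "x \<le> y \<Longrightarrow> y \<le> z \<Longrightarrow> x \<le> z" by (auto simp: less_eq_player_def)
  show "x \<le> y \<Longrightarrow> y \<le> x \<Longrightarrow> x = y" by (auto simp: less_eq_player_def intro: skey_inj)
  show "x \<le> y \<or> y \<le> x" by (auto simp: less_eq_player_def)
qed
end

lemma div2_cases: "(x::nat) div 2 = j \<Longrightarrow> x = 2*j \<or> x = 2*j+1"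
  by arith

lemma div2_aux: "(x::nat) div 2 = z div 2 \<Longrightarrow> y div 2 = z div 2 \<Longrightarrow> x \<noteq> z \<Longrightarrow> y \<noteq> z \<Longrightarrow> x = y"
  by (metis div2_cases)

lemma stronger_min: "stronger a b = min a b"
  by (simp add: stronger_def min_def less_eq_player_def)

locale tourn =
  fixes P :: "player set" and \<sigma> :: "player \<Rightarrow> nat" and N :: nat
  assumes bij: "bij_betw \<sigma> P {1..2^N}"
begin

lemma finP: "finite P" using bij bij_betw_finite by blast
lemma injs: "inj_on \<sigma> P" using bij by (simp add: bij_betw_def)
lemma rng: "p \<in> P \<Longrightarrow> 1 \<le> \<sigma> p \<and> \<sigma> p \<le> 2^N" using bij bij_betwE by fastforce

definition bp :: "nat \<Rightarrow> player \<Rightarrow> nat" where "bp r p = (\<sigma> p - 1) div 2^r"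
definition Blk :: "nat \<Rightarrow> nat \<Rightarrow> player set" where "Blk r j = {p \<in> P. bp r p = j}"

lemma bp_Suc: "bp (Suc r) p = bp r p div 2"
  by (simp only: bp_def power_Suc2 div_mult2_eq)

lemma bp_lt: assumes "p \<in> P" "r \<le> N" shows "bp r p < 2^(N-r)"
proof -
  have "\<sigma> p \<le> 2^N" "1 \<le> \<sigma> p" using rng[OF assms(1)] by auto
  then have "\<sigma> p - 1 < 2^N" by arith
  moreover have "(2::nat)^N = 2^(N-r) * 2^r" using assms(2) by (simp flip: power_add)
  ultimately have "\<sigma> p - 1 < 2^(N-r) * 2^r" by simp
  then show ?thesis unfolding bp_def by (rule less_mult_imp_div_less)
qed

lemma finBlk: "finite (Blk r j)" using finP by (simp add: Blk_def)

lemma in_Blk: "p \<in> P \<Longrightarrow> p \<in> Blk r (bp r p)" by (simp add: Blk_def)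

lemma Blk_ne: assumes "r \<le> N" "j < 2^(N-r)" shows "Blk r j \<noteq> {}"
proof -
  define x where "x = j * 2^r + 1"
  have "(j+1) * 2^r \<le> 2^(N-r) * 2^r" using assms(2) by (intro mult_right_mono) auto
  also have "\<dots> = 2^N" using assms(1) by (simp flip: power_add)
  finally have "2^r + j * 2^r \<le> (2::nat)^N" by (simp add: algebra_simps)
  moreover have "1 \<le> (2::nat)^r" by simp
  ultimately have "x \<le> 2^N" unfolding x_def by linarith
  then have x: "x \<in> {1..2^N}" unfolding x_def by simp
  define p where "p = inv_into P \<sigma> x"
  have pP: "p \<in> P" using x bij unfolding p_def by (metis bij_betw_def inv_into_into)
  have "\<sigma> p = x" using x bij unfolding p_def by (metis bij_betw_def f_inv_into_f)
  then have "bp r p = j" by (simp add: bp_def x_def)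
  then show ?thesis using pP by (auto simp: Blk_def)
qed

lemma Blk_Suc: "Blk (Suc r) j = Blk r (2*j) \<union> Blk r (2*j+1)"
  by (auto simp: Blk_def bp_Suc)

lemma winner_eq: "r \<le> N \<Longrightarrow> 1 \<le> k \<Longrightarrow> k \<le> 2^(N-r) \<Longrightarrow> winner P \<sigma> r k = Min (Blk r (k-1))"
proof (induction r arbitrary: k)
  case 0
  define p where "p = inv_into P \<sigma> k"
  have x: "k \<in> {1..2^N}" using 0 by auto
  have pP: "p \<in> P" using x bij unfolding p_def by (metis bij_betw_def inv_into_into)
  have sp: "\<sigma> p = k" using x bij unfolding p_def by (metis bij_betw_def f_inv_into_f)
  have "Blk 0 (k-1) = {p}"
  proof (auto simp: Blk_def bp_def pP sp)
    fix q assume "q \<in> P" "\<sigma> q - Suc 0 = k - Suc 0"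
    then have "\<sigma> q = \<sigma> p" using rng[OF \<open>q\<in>P\<close>] sp 0 by auto
    then show "q = p" using injs pP \<open>q\<in>P\<close> by (meson inj_on_eq_iff)
  qed
  then show ?case by (simp add: p_def)
next
  case (Suc r)
  have e: "(2::nat)^(N-r) = 2 * 2^(N - Suc r)" using Suc.prems(1)
    by (metis Suc_diff_le Suc_le_lessD diff_Suc_Suc power_Suc)
  have a1: "2*k-1-1 = 2*(k-1)" and a2: "2*k - 1 = 2*(k-1)+1" using Suc.prems by arith+
  have w1: "winner P \<sigma> r (2*k-1) = Min (Blk r (2*(k-1)))"
    using Suc.IH[of "2*k-1"] Suc.prems e unfolding a1 by simp
  have w2: "winner P \<sigma> r (2*k) = Min (Blk r (2*(k-1)+1))"
    using Suc.IH[of "2*k"] Suc.prems e unfolding a2[symmetric] by simp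
  have ne1: "Blk r (2*(k-1)) \<noteq> {}" using Suc.prems e by (intro Blk_ne) auto
  have ne2: "Blk r (2*(k-1)+1) \<noteq> {}" using Suc.prems e by (intro Blk_ne) auto
  have "winner P \<sigma> (Suc r) k = min (Min (Blk r (2*(k-1)))) (Min (Blk r (2*(k-1)+1)))"
    by (simp only: winner.simps stronger_min w1 w2)
  also have "\<dots> = Min (Blk (Suc r) (k-1))"
    by (simp only: Blk_Suc Min_Un[OF finBlk ne1 finBlk ne2])
  finally show ?case .
qed

definition Wn :: "nat \<Rightarrow> player \<Rightarrow> bool" where
  "Wn r p \<longleftrightarrow> p = Min (Blk r (bp r p))"

lemma Wn_iff: assumes "p \<in> P" shows "Wn r p \<longleftrightarrow> (\<forall>q\<in>P. bp r q = bp r p \<longrightarrow> p \<le> q)"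
proof
  assume W: "Wn r p"
  show "\<forall>q\<in>P. bp r q = bp r p \<longrightarrow> p \<le> q"
  proof (intro ballI impI)
    fix q assume "q \<in> P" "bp r q = bp r p"
    then have "q \<in> Blk r (bp r p)" by (simp add: Blk_def)
    then have "Min (Blk r (bp r p)) \<le> q" by (rule Min_le[OF finBlk])
    then show "p \<le> q" using W by (simp add: Wn_def)
  qed
next
  assume "\<forall>q\<in>P. bp r q = bp r p \<longrightarrow> p \<le> q"
  then show "Wn r p" unfolding Wn_def
    by (intro Min_eqI[symmetric] finBlk) (auto simp: Blk_def assms)
qed


lemma bp_le: assumes "r' \<le> r" shows "bp r p = bp r' p div 2^(r-r')"
proof -
  have "(2::nat)^r = 2^r' * 2^(r-r')" using assms by (simp flip: power_add)
  then show ?thesis by (simp add: bp_def div_mult2_eq)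
qed

lemma Wn_mono: assumes pP: "p \<in> P" and le: "r' \<le> r" and W: "Wn r p" shows "Wn r' p"
  unfolding Wn_iff[OF pP]
proof (intro ballI impI)
  fix q assume q: "q \<in> P" "bp r' q = bp r' p"
  have "bp r q = bp r p" using bp_le[OF le, of q] bp_le[OF le, of p] q(2) by simp
  then show "p \<le> q" using W q(1) unfolding Wn_iff[OF pP] by blast
qed

lemma Wn_0: assumes "p \<in> P" shows "Wn 0 p"
  unfolding Wn_iff[OF assms]
proof (intro ballI impI)
  fix q assume q: "q \<in> P" "bp 0 q = bp 0 p"
  then have "\<sigma> q - 1 = \<sigma> p - 1" by (simp add: bp_def)
  then have "\<sigma> q = \<sigma> p" using rng[OF q(1)] rng[OF assms] by linarith
  then have "q = p" using injs q(1) assms by (meson inj_on_eq_iff)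
  then show "p \<le> q" by simp
qed

lemma bp_N: assumes "p \<in> P" shows "bp N p = 0"
proof -
  have "\<sigma> p \<le> 2^N" "1 \<le> \<sigma> p" using rng[OF assms] by auto
  then have "\<sigma> p - 1 < 2^N" by arith
  then show ?thesis by (simp add: bp_def)
qed

definition lam :: "player \<Rightarrow> nat" where
  "lam p = Max {r. r \<le> N \<and> Wn r p}"

lemma lam_aux: assumes "p \<in> P"
  shows "lam p \<le> N" "Wn (lam p) p" "r \<le> N \<Longrightarrow> Wn r p \<Longrightarrow> r \<le> lam p"
proof -
  have fin: "finite {r. r \<le> N \<and> Wn r p}" by simp
  have ne: "0 \<in> {r. r \<le> N \<and> Wn r p}" using Wn_0[OF assms] by simp
  have "lam p \<in> {r. r \<le> N \<and> Wn r p}" unfolding lam_def using fin ne by (intro Max_in) auto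
  then show "lam p \<le> N" "Wn (lam p) p" by auto
  show "r \<le> N \<Longrightarrow> Wn r p \<Longrightarrow> r \<le> lam p" unfolding lam_def using fin by (intro Max_ge) auto
qed

lemma Wn_lam: assumes "p \<in> P" "r \<le> N" shows "Wn r p \<longleftrightarrow> r \<le> lam p"
proof
  assume "Wn r p" then show "r \<le> lam p" by (rule lam_aux(3)[OF assms])
next
  assume "r \<le> lam p" then show "Wn r p" by (rule Wn_mono[OF assms(1) _ lam_aux(2)[OF assms(1)]])
qed

definition opp :: "player \<Rightarrow> player" where
  "opp q = Min (Blk (Suc (lam q)) (bp (Suc (lam q)) q))"

definition Q :: "player set" where "Q = {q \<in> P. lam q < N}"

lemma finQ: "finite Q" using finP by (simp add: Q_def)

lemma opp_props: assumes "q \<in> Q"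
  shows "opp q \<in> P" "opp q < q" "bp (Suc (lam q)) (opp q) = bp (Suc (lam q)) q"
    "lam q < lam (opp q)"
proof -
  have qP: "q \<in> P" and lt: "lam q < N" using assms by (auto simp: Q_def)
  let ?B = "Blk (Suc (lam q)) (bp (Suc (lam q)) q)"
  have inB: "opp q \<in> ?B" unfolding opp_def using in_Blk[OF qP] finBlk by (intro Min_in) auto
  then show oP: "opp q \<in> P" and b: "bp (Suc (lam q)) (opp q) = bp (Suc (lam q)) q"
    by (auto simp: Blk_def)
  have "opp q \<le> q" unfolding opp_def using in_Blk[OF qP] finBlk by (intro Min_le) auto
  moreover have "\<not> Wn (Suc (lam q)) q" using Wn_lam[OF qP, of "Suc (lam q)"] lt by simp
  then have "opp q \<noteq> q" unfolding Wn_def opp_def by auto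
  ultimately show "opp q < q" by simp
  have "Wn (Suc (lam q)) (opp q)" unfolding Wn_def b by (simp add: opp_def)
  then show "lam q < lam (opp q)" using Wn_lam[OF oP, of "Suc (lam q)"] lt by simp
qed

definition beaten :: "player \<Rightarrow> player set" where
  "beaten p = {q \<in> Q. opp q = p}"

lemma Wn_eq_Min: assumes "Wn r p" "bp r p = j" shows "p = Min (Blk r j)"
proof -
  from assms(1) have "p = Min (Blk r (bp r p))" unfolding Wn_def .
  then show ?thesis unfolding assms(2) .
qed

lemma Min_Blk: assumes "r \<le> N" "j < 2^(N-r)"
  shows "Min (Blk r j) \<in> P" "bp r (Min (Blk r j)) = j" "Wn r (Min (Blk r j))"
proof -
  have "Min (Blk r j) \<in> Blk r j" using Blk_ne[OF assms] finBlk by (intro Min_in) auto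
  then show "Min (Blk r j) \<in> P" "bp r (Min (Blk r j)) = j" by (auto simp: Blk_def)
  then show "Wn r (Min (Blk r j))" by (simp add: Wn_def)
qed

lemma pow_split: "s < N \<Longrightarrow> (2::nat)^(N-s) = 2 * 2^(N - Suc s)"
  by (metis Suc_diff_Suc power_Suc)

lemma card_beaten: assumes pP: "p \<in> P" shows "card (beaten p) = lam p"
proof -
  have "bij_betw lam (beaten p) {..<lam p}"
  proof (rule bij_betw_imageI)
    show "inj_on lam (beaten p)"
    proof (rule inj_onI)
      fix q q' assume q: "q \<in> beaten p" and q': "q' \<in> beaten p" and e: "lam q = lam q'"
      define s where "s = lam q"
      have qQ: "q \<in> Q" "opp q = p" and qQ': "q' \<in> Q" "opp q' = p" using q q' by (auto simp: beaten_def)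
      have qP: "q \<in> P" and q'P: "q' \<in> P" using qQ qQ' by (auto simp: Q_def)
      have b1: "bp (Suc s) q = bp (Suc s) p" using opp_props(3)[OF qQ(1)] qQ s_def by simp
      have b2: "bp (Suc s) q' = bp (Suc s) p" using opp_props(3)[OF qQ'(1)] qQ' s_def e by simp
      have Wq: "Wn s q" using lam_aux(2)[OF qP] s_def by simp
      have Wq': "Wn s q'" using lam_aux(2)[OF q'P] s_def e by simp
      have "bp s q \<noteq> bp s p"
      proof
        assume "bp s q = bp s p"
        then have "q \<le> p" using Wq pP qP by (auto simp: Wn_iff)
        then show False using opp_props(2)[OF qQ(1)] qQ(2) by simp
      qed
      moreover have "bp s q' \<noteq> bp s p"
      proof
        assume "bp s q' = bp s p"
        then have "q' \<le> p" using Wq' pP q'P by (auto simp: Wn_iff)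
        then show False using opp_props(2)[OF qQ'(1)] qQ'(2) by simp
      qed
      ultimately have eq: "bp s q = bp s q'" using div2_aux[of "bp s q" "bp s p" "bp s q'"] b1 b2 unfolding bp_Suc by blast
      have "q = Min (Blk s (bp s q'))" using Wn_eq_Min[OF Wq eq] .
      also have "\<dots> = q'" using Wn_eq_Min[OF Wq' refl] by (rule HOL.sym)
      finally show "q = q'" .
    qed
  next
    show "lam ` beaten p = {..<lam p}"
    proof
      show "lam ` beaten p \<subseteq> {..<lam p}"
        using opp_props(4) by (auto simp: beaten_def)
    next
      show "{..<lam p} \<subseteq> lam ` beaten p"
      proof
        fix s assume "s \<in> {..<lam p}"
        then have sl: "s < lam p" by simp
        have lN: "lam p \<le> N" using lam_aux(1)[OF pP] .
        define j where "j = bp (Suc s) p"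
        have Wp: "Wn (Suc s) p" using Wn_lam[OF pP, of "Suc s"] sl lN by simp
        have jl: "j < 2^(N - Suc s)" unfolding j_def using bp_lt[OF pP, of "Suc s"] sl lN by simp
        define h where "h = 4*j+1 - bp s p"
        have bsp: "bp s p = 2*j \<or> bp s p = 2*j+1" using bp_Suc[of s p] unfolding j_def by (intro div2_cases) simp
        then have hh: "(h = 2*j \<or> h = 2*j+1) \<and> h \<noteq> bp s p" unfolding h_def by auto
        have hl: "h < 2^(N-s)" using hh jl pow_split[of s] sl lN by auto
        define q where "q = Min (Blk s h)"
        have qP: "q \<in> P" and bq: "bp s q = h" and Wq: "Wn s q"
          using Min_Blk[of s h] hl sl lN unfolding q_def by auto
        have bq1: "bp (Suc s) q = j" using bq hh by (auto simp: bp_Suc)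
        have qp: "q \<noteq> p" using bq hh by auto
        have pm: "p = Min (Blk (Suc s) j)" using Wn_eq_Min[OF Wp] j_def by simp
        have nW: "\<not> Wn (Suc s) q" using qp pm bq1 by (simp add: Wn_def)
        have lq: "lam q = s"
        proof -
          have "s \<le> lam q" using Wn_lam[OF qP, of s] Wq sl lN by simp
          moreover have "\<not> Suc s \<le> lam q" using Wn_lam[OF qP, of "Suc s"] nW sl lN by simp
          ultimately show ?thesis by simp
        qed
        have qQ: "q \<in> Q" using lq sl lN qP by (simp add: Q_def)
        have "opp q = p" unfolding opp_def lq bq1 pm ..
        then show "s \<in> lam ` beaten p" using qQ lq by (auto simp: beaten_def)
      qed
    qed
  qed
  then show ?thesis by (simp add: bij_betw_same_card)
qed

lemma game_pair: assumes "s < N" "j < 2^(N - Suc s)"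
  shows "Min (Blk s (2*j)) \<in> P" "Min (Blk s (2*j+1)) \<in> P"
    "bp s (Min (Blk s (2*j))) = 2*j" "bp s (Min (Blk s (2*j+1))) = 2*j+1"
    "Wn s (Min (Blk s (2*j)))" "Wn s (Min (Blk s (2*j+1)))"
    "Min (Blk (Suc s) j) = min (Min (Blk s (2*j))) (Min (Blk s (2*j+1)))"
proof -
  have l1: "2*j < 2^(N-s)" and l2: "2*j+1 < 2^(N-s)" using assms pow_split[of s] by auto
  show "Min (Blk s (2*j)) \<in> P" "bp s (Min (Blk s (2*j))) = 2*j" "Wn s (Min (Blk s (2*j)))"
    using Min_Blk[OF _ l1] assms by auto
  show "Min (Blk s (2*j+1)) \<in> P" "bp s (Min (Blk s (2*j+1))) = 2*j+1" "Wn s (Min (Blk s (2*j+1)))"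
    using Min_Blk[OF _ l2] assms by auto
  show "Min (Blk (Suc s) j) = min (Min (Blk s (2*j))) (Min (Blk s (2*j+1)))"
    unfolding Blk_Suc using Blk_ne[OF _ l1] Blk_ne[OF _ l2] assms finBlk by (intro Min_Un) auto
qed

lemma q_pair: assumes qQ: "q \<in> Q"
  defines "s \<equiv> lam q" and "j \<equiv> bp (Suc (lam q)) q"
  shows "(Min (Blk s (2*j)) = q \<and> Min (Blk s (2*j+1)) = opp q) \<or>
         (Min (Blk s (2*j)) = opp q \<and> Min (Blk s (2*j+1)) = q)"
proof -
  have qP: "q \<in> P" and lt: "s < N" using qQ by (auto simp: Q_def s_def)
  have jl: "j < 2^(N - Suc s)" unfolding j_def s_def using bp_lt[OF qP, of "Suc (lam q)"] lt s_def by simp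
  note G = game_pair[OF lt jl]
  have Wq: "Wn s q" using lam_aux(2)[OF qP] s_def by simp
  have bsq: "bp s q = 2*j \<or> bp s q = 2*j+1" using bp_Suc[of s q] unfolding j_def s_def by (intro div2_cases) simp
  have oq: "opp q = min (Min (Blk s (2*j))) (Min (Blk s (2*j+1)))"
    using G(7) by (simp add: opp_def s_def j_def)
  have ne: "opp q \<noteq> q" using opp_props(2)[OF qQ] by simp
  from bsq show ?thesis
  proof
    assume "bp s q = 2*j"
    then have "Min (Blk s (2*j)) = q" using Wn_eq_Min[OF Wq] by simp
    then show ?thesis using oq ne by (auto simp: min_def split: if_splits)
  next
    assume "bp s q = 2*j+1"
    then have "Min (Blk s (2*j+1)) = q" using Wn_eq_Min[OF Wq] by simp
    then show ?thesis using oq ne by (auto simp: min_def split: if_splits)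
  qed
qed

lemma tv_eq: assumes vsym: "\<And>a b. v a b = v b a"
  shows "tournament_value P v N \<sigma> = (\<Sum>q\<in>Q. v (opp q) q)"
proof -
  define T where "T = (SIGMA r:{1..N}. {1..(2::nat)^(N-r)})"
  define F where "F = (\<lambda>(r,k). v (winner P \<sigma> (r - 1) (2 * k - 1)) (winner P \<sigma> (r - 1) (2 * k)))"
  have "tournament_value P v N \<sigma> = sum F T"
    unfolding tournament_value_def T_def F_def by (subst sum.Sigma) auto
  also have "\<dots> = (\<Sum>q\<in>Q. v (opp q) q)"
  proof (rule HOL.sym, rule sum.reindex_bij_witness[where
        i = "\<lambda>(r,k). max (Min (Blk (r-1) (2*(k-1)))) (Min (Blk (r-1) (2*(k-1)+1)))"
        and j = "\<lambda>q. (Suc (lam q), Suc (bp (Suc (lam q)) q))"])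
    fix q assume qQ: "q \<in> Q"
    have qP: "q \<in> P" and lt: "lam q < N" using qQ by (auto simp: Q_def)
    have jl: "bp (Suc (lam q)) q < 2^(N - Suc (lam q))" using bp_lt[OF qP, of "Suc (lam q)"] lt by simp
    have oq: "opp q < q" using opp_props(2)[OF qQ] .
    show "(case (Suc (lam q), Suc (bp (Suc (lam q)) q)) of
          (r, k) \<Rightarrow> max (Min (Blk (r - 1) (2 * (k - 1)))) (Min (Blk (r - 1) (2 * (k - 1) + 1)))) = q"
      using q_pair[OF qQ] oq by (auto simp: max_def)
    show "(Suc (lam q), Suc (bp (Suc (lam q)) q)) \<in> T" using lt jl by (auto simp: T_def)
    have w1: "winner P \<sigma> (lam q) (2 * Suc (bp (Suc (lam q)) q) - 1) = Min (Blk (lam q) (2*bp (Suc (lam q)) q))"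
      using winner_eq[of "lam q" "2 * Suc (bp (Suc (lam q)) q) - 1"] lt jl pow_split[of "lam q"] by simp
    have w2: "winner P \<sigma> (lam q) (2 * Suc (bp (Suc (lam q)) q)) = Min (Blk (lam q) (2*bp (Suc (lam q)) q + 1))"
      using winner_eq[of "lam q" "2 * Suc (bp (Suc (lam q)) q)"] lt jl pow_split[of "lam q"] by simp
    have "F (Suc (lam q), Suc (bp (Suc (lam q)) q)) = v (Min (Blk (lam q) (2*bp (Suc (lam q)) q))) (Min (Blk (lam q) (2*bp (Suc (lam q)) q + 1)))"
      unfolding F_def using w1 w2 by simp
    then show "F (Suc (lam q), Suc (bp (Suc (lam q)) q)) = v (opp q) q"
      using q_pair[OF qQ] by (metis vsym)
  next
    fix x assume xT: "x \<in> T"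
    obtain r k where x: "x = (r,k)" by (cases x)
    define s where "s = r - 1"
    define j where "j = k - 1"
    have rs: "r = Suc s" and kj: "k = Suc j" and sl: "s < N" and jl: "j < 2^(N - Suc s)"
      using xT x by (auto simp: T_def s_def j_def)
    note G = game_pair[OF sl jl]
    define L where "L = max (Min (Blk s (2*j))) (Min (Blk s (2*j+1)))"
    have ab: "Min (Blk s (2*j)) \<noteq> Min (Blk s (2*j+1))" using G(3,4) by force
    have LP: "L \<in> P" using G(1,2) by (simp add: L_def max_def)
    have WL: "Wn s L" using G(5,6) by (simp add: L_def max_def)
    have bL: "bp s L = 2*j \<or> bp s L = 2*j+1" using G(3,4) by (simp add: L_def max_def)
    have bL1: "bp (Suc s) L = j" using bL by (auto simp: bp_Suc)
    have mm: "max (Min (Blk s (2*j))) (Min (Blk s (2*j+1))) \<noteq> min (Min (Blk s (2*j))) (Min (Blk s (2*j+1)))"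
      using ab by (simp add: max_def min_def)
    have nW: "\<not> Wn (Suc s) L" unfolding Wn_def bL1 G(7) using mm by (simp add: L_def)
    have lL: "lam L = s"
    proof -
      have "s \<le> lam L" using Wn_lam[OF LP, of s] WL sl by simp
      moreover have "\<not> Suc s \<le> lam L" using Wn_lam[OF LP, of "Suc s"] nW sl by simp
      ultimately show ?thesis by simp
    qed
    have LQ: "L \<in> Q" using lL sl LP by (simp add: Q_def)
    have iL: "(case x of (r, k) \<Rightarrow> max (Min (Blk (r - 1) (2 * (k - 1)))) (Min (Blk (r - 1) (2 * (k - 1) + 1)))) = L"
      by (simp add: x rs kj L_def)
    show "(case x of (r, k) \<Rightarrow> max (Min (Blk (r - 1) (2 * (k - 1)))) (Min (Blk (r - 1) (2 * (k - 1) + 1)))) \<in> Q"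
      using LQ iL by simp
    show "(\<lambda>q. (Suc (lam q), Suc (bp (Suc (lam q)) q)))
          (case x of (r, k) \<Rightarrow> max (Min (Blk (r - 1) (2 * (k - 1)))) (Min (Blk (r - 1) (2 * (k - 1) + 1)))) = x"
      unfolding iL using lL bL1 by (simp add: x rs kj)
  qed
  finally show ?thesis .
qed

end

lemma gval_sym: "gval n cls a b = gval n cls b a"
  unfolding gval_def by (auto simp: disj_commute)

lemma gval_range: "gval n cls a b = 1 \<or> gval n cls a b = 0 \<or> gval n cls a b = -5"
  unfolding gval_def by auto

lemma gval_X: assumes "i \<in> {1..n}" "y \<noteq> D i" "y \<noteq> XT i" "y \<noteq> XF i"
  shows "gval n cls y (X i) = -5"
  using assms unfolding gval_def val_one_def val_zero_def is_dx_def by auto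

lemma gval_D: assumes "i \<in> {1..n}" "q \<noteq> Dhat i" "q \<noteq> Dtil i" "q \<noteq> X i"
  shows "gval n cls (D i) q = -5"
  using assms unfolding gval_def val_one_def val_zero_def is_dx_def by auto

lemma gval_one: assumes "gval n cls a q = 1" "a < q"
  shows "(\<exists>i\<in>{1..n}. a = X i \<and> (q = XT i \<or> q = XF i)) \<or>
         (\<exists>j\<in>{1..length cls}. \<exists>i. q = C j \<and>
            ((a = XT i \<and> (i, True) \<in> clause_lits (cls ! (j - 1))) \<or>
             (a = XF i \<and> (i, False) \<in> clause_lits (cls ! (j - 1)))))"
proof -
  have "val_one n cls a q \<or> val_one n cls q a" using assms(1) unfolding gval_def
    by (auto split: if_splits)
  then show ?thesis using assms(2) unfolding val_one_def by (auto simp: less_player_def)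
qed

fun idx :: "player \<Rightarrow> nat" where
  "idx (Dhat i) = i" | "idx (D i) = i" | "idx (Dtil i) = i" | "idx (X i) = i"
| "idx (XT i) = i" | "idx (XF i) = i" | "idx (C i) = i" | "idx (F i) = i"

lemma card2: "card {a, b} \<le> 2"
  by (cases "a = b") auto

context tourn begin

lemma main_bound:
  assumes PP: "P = players n cls" and ms: "max23sat n cls"
  shows "\<exists>A. (\<Sum>q\<in>Q. gval n cls (opp q) q) \<le> int n + int (num_sat cls A)"
proof -
  define val where "val q = gval n cls (opp q) q" for q
  define Pos where "Pos = {q\<in>Q. val q = 1}"
  define Neg where "Neg = {q\<in>Q. val q = -5}"
  define Gs where "Gs i = {q\<in>Q. opp q = X i \<and> val q = 1}" for i
  define AT where "AT i = {q\<in>Q. opp q = XT i \<and> val q = 1}" for i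
  define AF where "AF i = {q\<in>Q. opp q = XF i \<and> val q = 1}" for i
  define A where "A i = (card (AF i) \<le> card (AT i))" for i
  define ch where "ch i = (if A i then AT i else AF i)" for i
  define cc where "cc i = (\<exists>q\<in>Neg. q = X i \<or> q = D i \<or> opp q = X i \<or> opp q = D i)" for i
  define I where "I = {1..n}"
  define m where "m = length cls"
  have finI: "finite I" by (simp add: I_def)
  have finPos: "finite Pos" "finite Neg" using finQ by (auto simp: Pos_def Neg_def)
  have finG: "finite (Gs i)" "finite (AT i)" "finite (AF i)" "finite (ch i)" for i
    using finQ by (auto simp: Gs_def AT_def AF_def ch_def)
  have finB: "finite (beaten x)" for x using finQ by (simp add: beaten_def)
  have lits_range: "i \<in> {1..n}" if "j \<in> {1..length cls}" "(i, b) \<in> clause_lits (cls ! (j - 1))" for i j b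
  proof -
    have "cls ! (j - 1) \<in> set cls" using that(1) by (intro nth_mem) auto
    then show ?thesis using ms that(2) unfolding max23sat_def by fastforce
  qed

  have V: "(\<Sum>q\<in>Q. val q) = int (card Pos) - 5 * int (card Neg)"
  proof -
    have "(\<Sum>q\<in>Q. val q) = (\<Sum>q\<in>Q. (if val q = 1 then 1 else 0) + (if val q = -5 then -5 else 0))"
    proof (rule sum.cong[OF refl])
      fix q show "val q = (if val q = 1 then 1 else 0) + (if val q = -5 then -5 else 0)"
        using gval_range[of n cls "opp q" q] unfolding val_def by auto
    qed
    also have "\<dots> = (\<Sum>q\<in>Q. (if val q = 1 then 1 else 0)) + (\<Sum>q\<in>Q. (if val q = -5 then -5 else 0))"
      by (rule sum.distrib)
    also have "(\<Sum>q\<in>Q. (if val q = 1 then 1 else 0)) = (\<Sum>q\<in>Pos. (1::int))"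
      unfolding Pos_def by (rule sum.inter_filter[OF finQ, symmetric])
    also have "(\<Sum>q\<in>Q. (if val q = -5 then -5 else 0)) = (\<Sum>q\<in>Neg. (-5::int))"
      unfolding Neg_def by (rule sum.inter_filter[OF finQ, symmetric])
    finally show ?thesis by simp
  qed

  have cover: "Pos \<subseteq> (\<Union>i\<in>I. Gs i \<union> AT i \<union> AF i)"
  proof
    fix q assume "q \<in> Pos"
    then have qQ: "q \<in> Q" and v1: "gval n cls (opp q) q = 1" by (auto simp: Pos_def val_def)
    have lt: "opp q < q" using opp_props(2)[OF qQ] .
    from gval_one[OF v1 lt] show "q \<in> (\<Union>i\<in>I. Gs i \<union> AT i \<union> AF i)"
    proof
      assume "\<exists>i\<in>{1..n}. opp q = X i \<and> (q = XT i \<or> q = XF i)"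
      then obtain i where "i \<in> {1..n}" "opp q = X i" by blast
      then show ?thesis using qQ v1 by (auto simp: I_def Gs_def val_def)
    next
      assume "\<exists>j\<in>{1..length cls}. \<exists>i. q = C j \<and>
            ((opp q = XT i \<and> (i, True) \<in> clause_lits (cls ! (j - 1))) \<or>
             (opp q = XF i \<and> (i, False) \<in> clause_lits (cls ! (j - 1))))"
      then obtain j i b where j: "j \<in> {1..length cls}" and o: "opp q = XT i \<or> opp q = XF i"
        and l: "(i, b) \<in> clause_lits (cls ! (j - 1))" by blast
      have "i \<in> I" using lits_range[OF j l] by (simp add: I_def)
      then show ?thesis using o qQ v1 by (auto simp: AT_def AF_def val_def)
    qed
  qed

  have cardPos: "card Pos \<le> (\<Sum>i\<in>I. card (Gs i) + card (AT i) + card (AF i))"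
  proof -
    have "card Pos \<le> card (\<Union>i\<in>I. Gs i \<union> AT i \<union> AF i)"
      by (rule card_mono[OF _ cover]) (simp add: finI finG)
    also have "\<dots> \<le> (\<Sum>i\<in>I. card (Gs i \<union> AT i \<union> AF i))" by (rule card_UN_le[OF finI])
    also have "\<dots> \<le> (\<Sum>i\<in>I. card (Gs i) + card (AT i) + card (AF i))"
    proof (rule sum_mono)
      fix i show "card (Gs i \<union> AT i \<union> AF i) \<le> card (Gs i) + card (AT i) + card (AF i)"
        using card_Un_le[of "Gs i \<union> AT i" "AF i"] card_Un_le[of "Gs i" "AT i"] by linarith
    qed
    finally show ?thesis .
  qed

  have per: "card (Gs i) + card (AT i) + card (AF i) \<le> 1 + card (ch i) + (if cc i then 2 else 0)"
    if iI: "i \<in> I" for i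
  proof -
    have i1: "i \<in> {1..n}" using iI by (simp add: I_def)
    have Gsub: "Gs i \<subseteq> {XT i, XF i}"
    proof
      fix q assume "q \<in> Gs i"
      then have qQ: "q \<in> Q" and o: "opp q = X i" and v: "gval n cls (X i) q = 1"
        by (auto simp: Gs_def val_def)
      from gval_one[OF v] opp_props(2)[OF qQ] o show "q \<in> {XT i, XF i}" by auto
    qed
    have "card (Gs i) \<le> card {XT i, XF i}" by (rule card_mono[OF _ Gsub]) simp
    then have cG2: "card (Gs i) \<le> 2" using card2[of "XT i" "XF i"] by linarith
    define J where "J = {j \<in> {1..m}. occurs_in i (cls ! (j - 1))}"
    have J3: "card J \<le> 3" using ms i1 unfolding max23sat_def J_def m_def by auto
    have ATsub: "AT i \<union> AF i \<subseteq> C ` J"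
    proof
      fix q assume "q \<in> AT i \<union> AF i"
      then have qQ: "q \<in> Q" and o: "opp q = XT i \<or> opp q = XF i" and v: "gval n cls (opp q) q = 1"
        by (auto simp: AT_def AF_def val_def)
      from gval_one[OF v opp_props(2)[OF qQ]] o obtain j b where "j \<in> {1..m}" "q = C j"
        "(i, b) \<in> clause_lits (cls ! (j - 1))" by (auto simp: m_def)
      then show "q \<in> C ` J" by (auto simp: J_def occurs_in_def)
    qed
    have disj: "AT i \<inter> AF i = {}" by (auto simp: AT_def AF_def)
    have ab3: "card (AT i) + card (AF i) \<le> 3"
    proof -
      have "card (AT i) + card (AF i) = card (AT i \<union> AF i)"
        using card_Un_disjoint[OF finG(2) finG(3) disj] by simp
      also have "\<dots> \<le> card (C ` J)" by (rule card_mono[OF _ ATsub]) (simp add: J_def)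
      also have "\<dots> \<le> card J" by (rule card_image_le) (simp add: J_def)
      finally show ?thesis using J3 by simp
    qed
    have chc: "card (ch i) = max (card (AT i)) (card (AF i))" by (simp add: ch_def A_def max_def)
    show ?thesis
    proof (cases "cc i")
      case True
      then show ?thesis using cG2 ab3 chc by (auto simp: max_def)
    next
      case False
      have XP: "X i \<in> P" "D i \<in> P" "Dhat i \<in> P" using i1 by (auto simp: PP players_def)
      have XQ: "X i \<in> Q"
      proof -
        have "\<not> Wn N (X i)"
        proof
          assume "Wn N (X i)"
          then have "X i \<le> Dhat i" using XP bp_N unfolding Wn_iff[OF XP(1)] by auto
          then show False by (simp add: less_eq_player_def)
        qed
        then have "lam (X i) < N" using Wn_lam[OF XP(1), of N] by simp
        then show ?thesis using XP by (simp add: Q_def)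
      qed
      have nonneg: "val q \<noteq> -5" if "q \<in> Q" "q = X i \<or> q = D i \<or> opp q = X i \<or> opp q = D i" for q
        using False that by (auto simp: cc_def Neg_def)
      have oX: "opp (X i) = D i"
      proof (rule ccontr)
        assume ne: "opp (X i) \<noteq> D i"
        have lt: "opp (X i) < X i" using opp_props(2)[OF XQ] .
        then have "opp (X i) \<noteq> XT i" "opp (X i) \<noteq> XF i" by (auto simp: less_player_def)
        then have "val (X i) = -5" using gval_X[OF i1 ne] by (simp add: val_def)
        then show False using nonneg[OF XQ] by simp
      qed
      have bD: "beaten (D i) \<subseteq> {X i, Dtil i}"
      proof
        fix q assume "q \<in> beaten (D i)"
        then have qQ: "q \<in> Q" and o: "opp q = D i" by (auto simp: beaten_def)
        have "val q \<noteq> -5" using nonneg[OF qQ] o by simp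
        then have "q = Dhat i \<or> q = Dtil i \<or> q = X i" using gval_D[OF i1, where q=q and cls=cls] o
          by (auto simp: val_def)
        moreover have "q \<noteq> Dhat i" using opp_props(2)[OF qQ] o by (auto simp: less_player_def)
        ultimately show "q \<in> {X i, Dtil i}" by auto
      qed
      have "lam (D i) \<le> 2"
      proof -
        have "card (beaten (D i)) \<le> card {X i, Dtil i}" by (rule card_mono[OF _ bD]) simp
        then show ?thesis using card_beaten[OF XP(2)] card2[of "X i" "Dtil i"] by linarith
      qed
      moreover have "lam (X i) < lam (D i)" using opp_props(4)[OF XQ] oX by simp
      ultimately have lX: "lam (X i) \<le> 1" by simp
      have GB: "Gs i \<subseteq> beaten (X i)" by (auto simp: Gs_def beaten_def)
      have cG: "card (Gs i) \<le> 1" using card_mono[OF finB GB] card_beaten[OF XP(1)] lX by simp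
      show ?thesis
      proof (cases "Gs i = {}")
        case True
        then show ?thesis using ab3 chc by (auto simp: max_def)
      next
        case False
        then obtain q where qG: "q \<in> Gs i" by blast
        have qQ: "q \<in> Q" and oq: "opp q = X i" using qG by (auto simp: Gs_def)
        have qP: "q \<in> P" using qQ by (simp add: Q_def)
        have "lam q < lam (X i)" using opp_props(4)[OF qQ] oq by simp
        then have "lam q = 0" using lX by simp
        then have "beaten q = {}" using card_beaten[OF qP] finB[of q] by simp
        moreover have "q = XT i \<or> q = XF i" using Gsub qG by auto
        moreover have "AT i \<subseteq> beaten (XT i)" "AF i \<subseteq> beaten (XF i)"
          by (auto simp: AT_def AF_def beaten_def)
        ultimately have "AT i = {} \<or> AF i = {}" by auto
        then show ?thesis using cG chc by (auto simp: max_def)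
      qed
    qed
  qed

  have chdisj: "\<forall>i\<in>I. \<forall>j\<in>I. i \<noteq> j \<longrightarrow> ch i \<inter> ch j = {}"
    by (auto simp: ch_def AT_def AF_def)
  have cardch: "card (\<Union>i\<in>I. ch i) = (\<Sum>i\<in>I. card (ch i))"
    by (rule card_UN_disjoint[OF finI]) (auto simp: finG chdisj)
  define SJ where "SJ = {j\<in>{1..length cls}. \<exists>l\<in>clause_lits (cls ! (j - 1)). lit_sat A l}"
  have satsub: "(\<Union>i\<in>I. ch i) \<subseteq> C ` SJ"
  proof
    fix q assume "q \<in> (\<Union>i\<in>I. ch i)"
    then obtain i where iI: "i \<in> I" and q: "q \<in> ch i" by blast
    show "q \<in> C ` SJ"
    proof (cases "A i")
      case True
      then have qQ: "q \<in> Q" and o: "opp q = XT i" and v: "gval n cls (opp q) q = 1"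
        using q by (auto simp: ch_def AT_def val_def)
      from gval_one[OF v opp_props(2)[OF qQ]] o obtain j where "j \<in> {1..length cls}" "q = C j"
        "(i, True) \<in> clause_lits (cls ! (j - 1))" by auto
      then show ?thesis using True by (force simp: SJ_def lit_sat_def)
    next
      case False
      then have qQ: "q \<in> Q" and o: "opp q = XF i" and v: "gval n cls (opp q) q = 1"
        using q by (auto simp: ch_def AF_def val_def)
      from gval_one[OF v opp_props(2)[OF qQ]] o obtain j where "j \<in> {1..length cls}" "q = C j"
        "(i, False) \<in> clause_lits (cls ! (j - 1))" by auto
      then show ?thesis using False by (force simp: SJ_def lit_sat_def)
    qed
  qed
  have numsat: "(\<Sum>i\<in>I. card (ch i)) \<le> num_sat cls A"
  proof -
    have "card (\<Union>i\<in>I. ch i) \<le> card (C ` SJ)" by (rule card_mono[OF _ satsub]) (simp add: SJ_def)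
    also have "\<dots> \<le> card SJ" by (rule card_image_le) (simp add: SJ_def)
    finally show ?thesis using cardch by (simp add: num_sat_def SJ_def)
  qed

  have ccsub: "{i\<in>I. cc i} \<subseteq> (\<Union>q\<in>Neg. {idx q, idx (opp q)})"
    by (auto simp: cc_def)
  have cc2: "card {i\<in>I. cc i} \<le> 2 * card Neg"
  proof -
    have "card {i\<in>I. cc i} \<le> card (\<Union>q\<in>Neg. {idx q, idx (opp q)})"
      by (rule card_mono[OF _ ccsub]) (simp add: finPos)
    also have "\<dots> \<le> (\<Sum>q\<in>Neg. card {idx q, idx (opp q)})" by (rule card_UN_le[OF finPos(2)])
    also have "\<dots> \<le> (\<Sum>q\<in>Neg. 2)" by (rule sum_mono) (rule card2)
    finally show ?thesis by simp
  qed
  have sumcc: "(\<Sum>i\<in>I. (if cc i then 2 else 0::nat)) = 2 * card {i\<in>I. cc i}"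
    by (simp add: sum.inter_filter[OF finI, symmetric])
  have "card Pos \<le> (\<Sum>i\<in>I. 1 + card (ch i) + (if cc i then 2 else 0))"
    using cardPos sum_mono[of I "\<lambda>i. card (Gs i) + card (AT i) + card (AF i)", OF per] by linarith
  also have "\<dots> = card I + (\<Sum>i\<in>I. card (ch i)) + (\<Sum>i\<in>I. (if cc i then 2 else 0::nat))"
    by (simp only: sum.distrib) simp
  finally have "card Pos \<le> n + num_sat cls A + 4 * card Neg"
    using numsat sumcc cc2 by (simp add: I_def)
  then have "(\<Sum>q\<in>Q. val q) \<le> int n + int (num_sat cls A)" using V by linarith
  then show ?thesis unfolding val_def by blast
qed

end

theorem lemma4:
  fixes n :: nat and cls :: "clause list" and k :: int
  assumes "max23sat n cls"
    and "seeding (players n cls) (nprime n) \<sigma>"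
    and "Tphi_value n cls \<sigma> \<ge> k + int n"
  shows "\<exists>a :: nat \<Rightarrow> bool. int (num_sat cls a) \<ge> k"
proof -
  interpret T: tourn "players n cls" \<sigma> "nprime n"
    using assms(2) by unfold_locales (simp add: seeding_def)
  have "Tphi_value n cls \<sigma> = (\<Sum>q\<in>T.Q. gval n cls (T.opp q) q)"
    unfolding Tphi_value_def by (rule T.tv_eq) (rule gval_sym)
  moreover obtain A where "(\<Sum>q\<in>T.Q. gval n cls (T.opp q) q) \<le> int n + int (num_sat cls A)"
    using T.main_bound[OF refl assms(1)] by blast
  ultimately show ?thesis using assms(3) by (intro exI[of _ A]) linarith
qed

end
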